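(* Assume the setting, algorithm $\mathrm{ALG}$ and linear program described in the context. For every $\varepsilon>0$ and every integer horizon $H\ge \max_{p\in\Pi} r_p$, $$\mathrm{ALG}\;\le\; 2\Big(\frac{2}{\varepsilon}+1\Big)\cdot \mathrm{val}(\mathcal P_{\varepsilon,H}).$$ That is, $\mathrm{ALG}$ running at unit speed is $2(2/\varepsilon+1)$-competitive against the (LP relaxation of the) optimal offline preemptive, migratory solution whose reconfigurable transmissions run at speed $1/(2+\varepsilon)$ (equivalently, $\mathrm{ALG}$ has speedup $2+\varepsilon$).
   Context: Network. $S,T,R,D$ are pairwise disjoint finite sets (sources, transmitters, receivers, destinations). Each transmitter $t\in T$ is attached to a source $s(t)\in S$ via a link of integer delay $d(s(t),t)\ge 0$; each receiver $r\in R$ is attached to a destination $d(r)\in D$ via a link of integer delay $d(r,d(r))\ge 0$. A set $E_R\subseteq T\times R$ of reconfigurable edges is given, each $e\in E_R$ with integer delay $d(e)\ge 1$ (sending an amount $s$ through $e$ takes time $s\cdot d(e)$). A set $E_\ell\subseteq S\times D$ of fixed links is given, each with integer delay $d(\cdot,\cdot)\ge0$. For $e=(t,r)\in E_R$ put $\Delta(e)=d(s(t),t)+d(e)+d(r,d(r))$. Two edges of $E_R$ are adjacent if they share a transmitter or a receiver (an edge is adjacent to itself). Packets. $\Pi$ is a finite set of unit-size packets; packet $p$ has weight $w_p>0$, release time $r_p\in\mathbb Z_{\ge1}$, source $s_p\in S$, destination $d_p\in D$. Let $E(p)=\{(t,r)\in E_R: s(t)=s_p,\ d(r)=d_p\}$;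 assume $E(p)\neq\emptyset$ for all $p$. $\Pi_\ell$ is the set of packets with $(s_p,d_p)\in E_\ell$, and for such $p$, $\ell_p:=d(s_p,d_p)$. Fix a total order $\prec$ on $\Pi$ with $r_p<r_q\Rightarrow p\prec q$ ("$p$ arrived before $q$"). Algorithm ALG. Packets are processed one by one in the order $\prec$; packet $p$ is processed at time $r_p$, before the transmission step $r_p$. A packet assigned to a reconfigurable edge $e$ is split into $d(e)$ chunks, each of size $1/d(e)$ and weight $w_p/d(e)$, all assigned to $e$; for a chunk $c$, $p(c)$ is its packet, $w_c$ its weight, $e(c)$ its edge. A chunk is pending until it is transmitted. For a set $C$ of chunks, $W(C)$ is its total weight. When $p$ is processed, let $B(p)$ be the set of pending chunks of packets $p'\prec p$. For $e=(t,r)\in E(p)$ let $\mathrm{Adj}(p,e)$ be the chunks of $B(p)$ whose edge is adjacent to $e$, $H(p,e)=\{c\in \mathrm{Adj}(p,e): w_c\ge w_p/d(e)\}$, $L(p,e)=\mathrm{Adj}(p,e)\setminus H(p,e)$, and $$\mathrm{imp}(p,e)=w_p\Big(d(s_p,t)+\tfrac{d(e)+1}{2}+d(r,d_p)\Big)+w_p\,|H(p,e)|+d(e)\,W(L(p,e)).$$ Let $e^*\in\arg\min_{e\in E(p)}\mathrm{imp}(p,e)$. If $p\in\Pi_\ell$ and $w_p\ell_p\le \mathrm{imp}(p,e^* )$, $p$ is sent over its fixed link (latency $w_p\ell_p$); otherwise $p$ is assigned to $e(p):=e^*$ and split into chunks. Scheduler: at each integer time $\tau\ge1$ (after processing the packets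 released at $\tau$), build $M_\tau$ greedily: start with $M_\tau=\emptyset$ and go through all pending chunks in order of decreasing weight, ties broken by $\prec$ on their packets (ties among chunks of the same packet arbitrary), adding a chunk $c$ to $M_\tau$ iff no chunk already in $M_\tau$ has an edge adjacent to $e(c)$. The chunks of $M_\tau$ are transmitted at step $\tau$ (and cease to be pending). If chunk $c$ of $p$ is transmitted at step $\tau_c$ via $e(p)=(t,r)$, its completion time is $f_c=\tau_c+1+d(s_p,t)+d(r,d_p)$, and $c$ is active at integer times $\tau$ with $r_p\le\tau<f_c$. The cost is $\mathrm{ALG}=\sum_{p\text{ sent on fixed link}}w_p\ell_p+\sum_{\text{chunks }c}w_c\,(f_c-r_{p(c)})$. Linear program. For $\varepsilon>0$ and integer $H\ge\max_p r_p$, $\mathcal P_{\varepsilon,H}$ has variables $x_{p,e,\tau}\ge0$ ($p\in\Pi$, $e\in E(p)$, $\tau\in\{r_p,\dots,H\}$) and $y_p\ge0$ ($p\in\Pi_\ell$): minimize $\sum_{p}\sum_{e\in E(p)}\sum_{\tau} w_p x_{p,e,\tau}(\tau+\Delta(e)-r_p)+\sum_{p\in\Pi_\ell}w_p\ell_p y_p$ subject to $\sum_{e,\tau}x_{p,e,\tau}+y_p\ge1$ for $p\in\Pi_\ell$; $\sum_{e,\tau}x_{p,e,\tau}\ge1$ for $p\notin\Pi_\ell$; for every $\tau$ and $t\in T$: $\sum_{r}\sum_{p: r_p\le\tau,(t,r)\in E(p)}d(t,r)\,x_{p,(t,r),\tau}\le\frac1{2+\varepsilon}$; for every $\tau$ and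 $r\in R$: $\sum_{t}\sum_{p:r_p\le\tau,(t,r)\in E(p)}d(t,r)\,x_{p,(t,r),\tau}\le\frac1{2+\varepsilon}$. $\mathrm{val}(\mathcal P_{\varepsilon,H})$ denotes its optimal value ($+\infty$ if infeasible). *)

theory Defs
  imports Complex_Main "HOL-Library.Extended_Real"
begin

text \<open>Sources, transmitters, receivers and destinations live in four distinct
  type variables, hence are automatically pairwise disjoint.\<close>

record ('s,'t,'r,'d) network =
  Src   :: "'s set"
  Trs   :: "'t set"
  Rcv   :: "'r set"
  Dst   :: "'d set"
  srcOf :: "'t \<Rightarrow> 's"
  dSrc  :: "'t \<Rightarrow> nat"         \<comment> \<open>d(s(t),t)\<close>
  dstOf :: "'r \<Rightarrow> 'd"
  dDst  :: "'r \<Rightarrow> nat"         \<comment> \<open>d(r,d(r))\<close>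
  ER    :: "('t \<times> 'r) set"
  dR    :: "'t \<times> 'r \<Rightarrow> nat"
  EL    :: "('s \<times> 'd) set"
  dL    :: "'s \<times> 'd \<Rightarrow> nat"

record ('p,'s,'d) packets =
  Pk  :: "'p set"
  wt  :: "'p \<Rightarrow> real"
  rl  :: "'p \<Rightarrow> nat"
  sP  :: "'p \<Rightarrow> 's"
  dP  :: "'p \<Rightarrow> 'd"

definition Ep :: "('s,'t,'r,'d) network \<Rightarrow> ('p,'s,'d) packets \<Rightarrow> 'p \<Rightarrow> ('t \<times> 'r) set" where
  "Ep N P p = {(t,r) \<in> ER N. srcOf N t = sP P p \<and> dstOf N r = dP P p}"

definition PiL :: "('s,'t,'r,'d) network \<Rightarrow> ('p,'s,'d) packets \<Rightarrow> 'p set" where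
  "PiL N P = {p \<in> Pk P. (sP P p, dP P p) \<in> EL N}"

definition ellp :: "('s,'t,'r,'d) network \<Rightarrow> ('p,'s,'d) packets \<Rightarrow> 'p \<Rightarrow> nat" where
  "ellp N P p = dL N (sP P p, dP P p)"

definition Delta :: "('s,'t,'r,'d) network \<Rightarrow> 't \<times> 'r \<Rightarrow> nat" where
  "Delta N e = dSrc N (fst e) + dR N e + dDst N (snd e)"

definition wf_instance :: "('s,'t,'r,'d) network \<Rightarrow> ('p,'s,'d) packets \<Rightarrow> bool" where
  "wf_instance N P \<longleftrightarrow>
     finite (Src N) \<and> finite (Trs N) \<and> finite (Rcv N) \<and> finite (Dst N) \<and>
     (\<forall>t\<in>Trs N. srcOf N t \<in> Src N) \<and> (\<forall>r\<in>Rcv N. dstOf N r \<in> Dst N) \<and>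
     ER N \<subseteq> Trs N \<times> Rcv N \<and> (\<forall>e\<in>ER N. dR N e \<ge> 1) \<and>
     EL N \<subseteq> Src N \<times> Dst N \<and>
     finite (Pk P) \<and>
     (\<forall>p\<in>Pk P. wt P p > 0 \<and> rl P p \<ge> 1 \<and> sP P p \<in> Src N \<and> dP P p \<in> Dst N
                \<and> Ep N P p \<noteq> {})"

definition adj :: "'t \<times> 'r \<Rightarrow> 't \<times> 'r \<Rightarrow> bool" where
  "adj e e' \<longleftrightarrow> fst e = fst e' \<or> snd e = snd e'"

section \<open>The algorithm ALG (as a characterisation of its executions)\<close>

text \<open>An execution is described by
  \<^item> asg p = None (p sent over fixed link) or asg p = Some e (p assigned to e);
  \<^item> the chunks of p assigned to e are the pairs (p,i) with i < d(e);
  \<^item> tx c is the step at which chunk c is transmitted.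
  The order \<prec> is the relation prec (pairs (p,q) with p \<prec> q).\<close>

definition chunks :: "('s,'t,'r,'d) network \<Rightarrow> ('p,'s,'d) packets \<Rightarrow> ('p \<Rightarrow> ('t \<times> 'r) option)
    \<Rightarrow> ('p \<times> nat) set" where
  "chunks N P asg = {(p,i). p \<in> Pk P \<and> (\<exists>e. asg p = Some e \<and> i < dR N e)}"

definition edgeOf :: "('p \<Rightarrow> ('t \<times> 'r) option) \<Rightarrow> 'p \<times> nat \<Rightarrow> 't \<times> 'r" where
  "edgeOf asg c = the (asg (fst c))"

definition cw :: "('s,'t,'r,'d) network \<Rightarrow> ('p,'s,'d) packets \<Rightarrow> ('p \<Rightarrow> ('t \<times> 'r) option)
    \<Rightarrow> 'p \<times> nat \<Rightarrow> real" where
  "cw N P asg c = wt P (fst c) / real (dR N (edgeOf asg c))"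

text \<open>B(p): pending chunks of earlier packets when p is processed (at time r_p, before
  transmission step r_p), i.e. those transmitted at a step \<ge> r_p.\<close>
definition Bset :: "('s,'t,'r,'d) network \<Rightarrow> ('p,'s,'d) packets \<Rightarrow> ('p \<times> 'p) set
    \<Rightarrow> ('p \<Rightarrow> ('t \<times> 'r) option) \<Rightarrow> ('p \<times> nat \<Rightarrow> nat) \<Rightarrow> 'p \<Rightarrow> ('p \<times> nat) set" where
  "Bset N P prec asg tx p = {c \<in> chunks N P asg. (fst c, p) \<in> prec \<and> rl P p \<le> tx c}"

definition imp :: "('s,'t,'r,'d) network \<Rightarrow> ('p,'s,'d) packets \<Rightarrow> ('p \<times> 'p) set
    \<Rightarrow> ('p \<Rightarrow> ('t \<times> 'r) option) \<Rightarrow> ('p \<times> nat \<Rightarrow> nat) \<Rightarrow> 'p \<Rightarrow> 't \<times> 'r \<Rightarrow> real" where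
  "imp N P prec asg tx p e =
     (let A  = {c \<in> Bset N P prec asg tx p. adj (edgeOf asg c) e};
          Hs = {c \<in> A. cw N P asg c \<ge> wt P p / real (dR N e)};
          Ls = A - Hs
      in wt P p * (real (dSrc N (fst e)) + (real (dR N e) + 1) / 2 + real (dDst N (snd e)))
         + wt P p * real (card Hs) + real (dR N e) * sum (cw N P asg) Ls)"

text \<open>Decision made when processing p (any argmin e* may be chosen).\<close>
definition proc_ok :: "('s,'t,'r,'d) network \<Rightarrow> ('p,'s,'d) packets \<Rightarrow> ('p \<times> 'p) set
    \<Rightarrow> ('p \<Rightarrow> ('t \<times> 'r) option) \<Rightarrow> ('p \<times> nat \<Rightarrow> nat) \<Rightarrow> 'p \<Rightarrow> bool" where
  "proc_ok N P prec asg tx p \<longleftrightarrow>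
     (\<exists>e\<in>Ep N P p. (\<forall>e'\<in>Ep N P p. imp N P prec asg tx p e \<le> imp N P prec asg tx p e') \<and>
        (if p \<in> PiL N P \<and> wt P p * real (ellp N P p) \<le> imp N P prec asg tx p e
         then asg p = None else asg p = Some e))"

definition pending :: "('s,'t,'r,'d) network \<Rightarrow> ('p,'s,'d) packets
    \<Rightarrow> ('p \<Rightarrow> ('t \<times> 'r) option) \<Rightarrow> ('p \<times> nat \<Rightarrow> nat) \<Rightarrow> nat \<Rightarrow> ('p \<times> nat) set" where
  "pending N P asg tx \<tau> = {c \<in> chunks N P asg. rl P (fst c) \<le> \<tau> \<and> \<tau> \<le> tx c}"

definition chunk_before :: "('s,'t,'r,'d) network \<Rightarrow> ('p,'s,'d) packets \<Rightarrow> ('p \<times> 'p) set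
    \<Rightarrow> ('p \<Rightarrow> ('t \<times> 'r) option) \<Rightarrow> 'p \<times> nat \<Rightarrow> 'p \<times> nat \<Rightarrow> bool" where
  "chunk_before N P prec asg c c' \<longleftrightarrow>
     cw N P asg c > cw N P asg c' \<or> (cw N P asg c = cw N P asg c' \<and> (fst c, fst c') \<in> prec)"

definition greedy :: "('c \<Rightarrow> 't \<times> 'r) \<Rightarrow> 'c list \<Rightarrow> 'c set" where
  "greedy ed L = foldl (\<lambda>M c. if (\<exists>c'\<in>M. adj (ed c') (ed c)) then M else insert c M) {} L"

definition sched_ok :: "('s,'t,'r,'d) network \<Rightarrow> ('p,'s,'d) packets \<Rightarrow> ('p \<times> 'p) set
    \<Rightarrow> ('p \<Rightarrow> ('t \<times> 'r) option) \<Rightarrow> ('p \<times> nat \<Rightarrow> nat) \<Rightarrow> nat \<Rightarrow> bool" where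
  "sched_ok N P prec asg tx \<tau> \<longleftrightarrow>
     (\<exists>L. distinct L \<and> set L = pending N P asg tx \<tau> \<and>
          sorted_wrt (\<lambda>a b. \<not> chunk_before N P prec asg b a) L \<and>
          {c \<in> chunks N P asg. tx c = \<tau>} = greedy (edgeOf asg) L)"

definition alg_run :: "('s,'t,'r,'d) network \<Rightarrow> ('p,'s,'d) packets \<Rightarrow> ('p \<times> 'p) set
    \<Rightarrow> ('p \<Rightarrow> ('t \<times> 'r) option) \<Rightarrow> ('p \<times> nat \<Rightarrow> nat) \<Rightarrow> bool" where
  "alg_run N P prec asg tx \<longleftrightarrow>
     (\<forall>p. p \<notin> Pk P \<longrightarrow> asg p = None) \<and>
     (\<forall>p\<in>Pk P. proc_ok N P prec asg tx p) \<and>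
     (\<forall>c\<in>chunks N P asg. rl P (fst c) \<le> tx c) \<and>
     (\<forall>\<tau>\<ge>1. sched_ok N P prec asg tx \<tau>)"

definition alg_cost :: "('s,'t,'r,'d) network \<Rightarrow> ('p,'s,'d) packets
    \<Rightarrow> ('p \<Rightarrow> ('t \<times> 'r) option) \<Rightarrow> ('p \<times> nat \<Rightarrow> nat) \<Rightarrow> real" where
  "alg_cost N P asg tx =
     (\<Sum>p\<in>{p \<in> Pk P. asg p = None}. wt P p * real (ellp N P p)) +
     (\<Sum>c\<in>chunks N P asg. cw N P asg c *
        (real (tx c + 1 + dSrc N (fst (edgeOf asg c)) + dDst N (snd (edgeOf asg c)))
         - real (rl P (fst c))))"

definition lp_feasible :: "('s,'t,'r,'d) network \<Rightarrow> ('p,'s,'d) packets \<Rightarrow> real \<Rightarrow> nat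
    \<Rightarrow> ('p \<Rightarrow> 't \<times> 'r \<Rightarrow> nat \<Rightarrow> real) \<Rightarrow> ('p \<Rightarrow> real) \<Rightarrow> bool" where
  "lp_feasible N P \<epsilon> H x y \<longleftrightarrow>
     (\<forall>p\<in>Pk P. \<forall>e\<in>Ep N P p. \<forall>\<tau>\<in>{rl P p..H}. x p e \<tau> \<ge> 0) \<and>
     (\<forall>p\<in>PiL N P. y p \<ge> 0) \<and>
     (\<forall>p\<in>PiL N P. (\<Sum>e\<in>Ep N P p. \<Sum>\<tau>\<in>{rl P p..H}. x p e \<tau>) + y p \<ge> 1) \<and>
     (\<forall>p\<in>Pk P - PiL N P. (\<Sum>e\<in>Ep N P p. \<Sum>\<tau>\<in>{rl P p..H}. x p e \<tau>) \<ge> 1) \<and>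
     (\<forall>\<tau>\<le>H. \<forall>t\<in>Trs N.
        (\<Sum>r\<in>Rcv N. \<Sum>p\<in>{p \<in> Pk P. rl P p \<le> \<tau> \<and> (t,r) \<in> Ep N P p}.
            real (dR N (t,r)) * x p (t,r) \<tau>) \<le> 1 / (2 + \<epsilon>)) \<and>
     (\<forall>\<tau>\<le>H. \<forall>r\<in>Rcv N.
        (\<Sum>t\<in>Trs N. \<Sum>p\<in>{p \<in> Pk P. rl P p \<le> \<tau> \<and> (t,r) \<in> Ep N P p}.
            real (dR N (t,r)) * x p (t,r) \<tau>) \<le> 1 / (2 + \<epsilon>))"

definition lp_obj :: "('s,'t,'r,'d) network \<Rightarrow> ('p,'s,'d) packets \<Rightarrow> nat
    \<Rightarrow> ('p \<Rightarrow> 't \<times> 'r \<Rightarrow> nat \<Rightarrow> real) \<Rightarrow> ('p \<Rightarrow> real) \<Rightarrow> real" where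
  "lp_obj N P H x y =
     (\<Sum>p\<in>Pk P. \<Sum>e\<in>Ep N P p. \<Sum>\<tau>\<in>{rl P p..H}.
        wt P p * x p e \<tau> * (real \<tau> + real (Delta N e) - real (rl P p))) +
     (\<Sum>p\<in>PiL N P. wt P p * real (ellp N P p) * y p)"

text \<open>Optimal value, +\<infinity> if infeasible.\<close>
definition lp_val :: "('s,'t,'r,'d) network \<Rightarrow> ('p,'s,'d) packets \<Rightarrow> real \<Rightarrow> nat \<Rightarrow> ereal" where
  "lp_val N P \<epsilon> H = (INF xy \<in> {(x,y). lp_feasible N P \<epsilon> H x y}. ereal (lp_obj N P H (fst xy) (snd xy)))"

end

theory Submission
  imports Defs
begin

lemma greedy_snoc: "greedy ed (xs @ [x]) = (if (\<exists>c'\<in>greedy ed xs. adj (ed c') (ed x)) then greedy ed xs else insert x (greedy ed xs))"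
  by (simp add: greedy_def)

lemma greedy_Nil[simp]: "greedy ed [] = {}" by (simp add: greedy_def)

lemma greedy_sub: "greedy ed xs \<subseteq> set xs"
  by (induction xs rule: rev_induct) (auto simp: greedy_snoc)

lemma greedy_mono: "greedy ed xs \<subseteq> greedy ed (xs@[x])"
  by (auto simp: greedy_snoc)

lemma adj_sym: "adj a b = adj b a" by (auto simp: adj_def)
lemma adj_refl[simp]: "adj a a" by (auto simp: adj_def)

lemma greedy_indep: "a \<in> greedy ed xs \<Longrightarrow> b \<in> greedy ed xs \<Longrightarrow> a \<noteq> b \<Longrightarrow> \<not> adj (ed a) (ed b)"
proof (induction xs arbitrary: a b rule: rev_induct)
  case Nil then show ?case by simp
next
  case (snoc x xs)
  show ?case
  proof (cases "\<exists>c'\<in>greedy ed xs. adj (ed c') (ed x)")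
    case True then show ?thesis using snoc by (auto simp: greedy_snoc)
  next
    case False
    then show ?thesis using snoc by (auto simp: greedy_snoc adj_sym)
  qed
qed

lemma greedy_block: "x \<in> set xs \<Longrightarrow> x \<notin> greedy ed xs \<Longrightarrow>
  \<exists>i j. i < j \<and> j < length xs \<and> xs!j = x \<and> xs!i \<in> greedy ed xs \<and> adj (ed (xs!i)) (ed x)"
proof (induction xs rule: rev_induct)
  case Nil then show ?case by simp
next
  case (snoc a xs)
  show ?case
  proof (cases "x \<in> set xs \<and> x \<notin> greedy ed xs")
    case True
    then obtain i j where ij: "i < j" "j < length xs" "xs!j = x" "xs!i \<in> greedy ed xs" "adj (ed (xs!i)) (ed x)"
      using snoc.IH by blast
    then show ?thesis using greedy_mono[of ed xs a]
      by (intro exI[of _ i] exI[of _ j]) (auto simp: nth_append)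
  next
    case False
    have xa: "x = a"
    proof (rule ccontr)
      assume "x \<noteq> a"
      then have "x \<in> set xs" using snoc by auto
      with False have "x \<in> greedy ed xs" by auto
      then show False using snoc greedy_mono[of ed xs a] by auto
    qed
    then have "\<exists>c'\<in>greedy ed xs. adj (ed c') (ed a)" using snoc by (auto simp: greedy_snoc split: if_splits)
    then obtain c' where c': "c' \<in> greedy ed xs" "adj (ed c') (ed a)" by blast
    then have "c' \<in> set xs" using greedy_sub[of ed xs] by blast
    then obtain i where i: "i < length xs" "xs!i = c'" by (auto simp: in_set_conv_nth)
    have "greedy ed (xs@[a]) = greedy ed xs" using c' by (auto simp: greedy_snoc)
    then show ?thesis using i c' xa
      by (intro exI[of _ i] exI[of _ "length xs"]) (auto simp: nth_append)
  qed
qed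

lemma count_pairs:
  fixes f :: "'a \<Rightarrow> nat"
  assumes "finite S" "inj_on f S"
  shows "2 * (\<Sum>x\<in>S. card {y\<in>S. f y < f x}) = card S * card S - card S"
proof -
  define P1 where "P1 = Sigma S (\<lambda>x. {y\<in>S. f y < f x})"
  define P2 where "P2 = Sigma S (\<lambda>x. {y\<in>S. f x < f y})"
  have c1: "card P1 = (\<Sum>x\<in>S. card {y\<in>S. f y < f x})"
    unfolding P1_def using assms by (subst card_SigmaI) auto
  have "P2 = (\<lambda>(x,y). (y,x)) ` P1" unfolding P1_def P2_def by auto
  moreover have "inj_on (\<lambda>(x,y). (y,x)) P1" by (auto simp: inj_on_def)
  ultimately have c2: "card P2 = card P1" by (simp add: card_image)
  have fin: "finite (S \<times> S)" using assms by auto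
  have dis: "P1 \<inter> P2 = {}" unfolding P1_def P2_def by auto
  have un1: "P1 \<union> P2 \<subseteq> S \<times> S - (\<lambda>x. (x,x)) ` S"
    unfolding P1_def P2_def by auto
  have un2: "S \<times> S - (\<lambda>x. (x,x)) ` S \<subseteq> P1 \<union> P2"
  proof
    fix z assume z: "z \<in> S \<times> S - (\<lambda>x. (x,x)) ` S"
    obtain x y where xy: "z = (x,y)" by fastforce
    have xyS: "x \<in> S" "y \<in> S" using z xy by auto
    have "x \<noteq> y" using z xy by auto
    then have "f x \<noteq> f y" using inj_onD[OF assms(2) _ xyS] by blast
    then have "f y < f x \<or> f x < f y" by linarith
    then show "z \<in> P1 \<union> P2" using xy xyS unfolding P1_def P2_def by blast
  qed
  have un: "P1 \<union> P2 = S \<times> S - (\<lambda>x. (x,x)) ` S" using un1 un2 by (rule equalityI)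
  have f1: "finite P1" using fin by (rule finite_subset[rotated]) (auto simp: P1_def)
  have f2: "finite P2" using fin by (rule finite_subset[rotated]) (auto simp: P2_def)
  have "card (P1 \<union> P2) = card P1 + card P2"
    using dis f1 f2 by (intro card_Un_disjoint)
  moreover have "card (S \<times> S - (\<lambda>x. (x,x)) ` S) = card S * card S - card S"
  proof -
    have s: "(\<lambda>x. (x,x)) ` S \<subseteq> S \<times> S" by auto
    have fi: "finite ((\<lambda>x. (x,x)) ` S)" using assms(1) by simp
    have ci: "card ((\<lambda>x. (x,x)) ` S) = card S" by (rule card_image) (simp add: inj_on_def)
    show ?thesis using card_Diff_subset[OF fi s] ci by (simp add: card_cartesian_product)
  qed
  ultimately show ?thesis using un c1 c2 by simp
qed



locale setting =
  fixes N :: "('s,'t,'r,'d) network" and P :: "('p,'s,'d) packets"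
    and prec :: "('p \<times> 'p) set"
    and asg :: "'p \<Rightarrow> ('t \<times> 'r) option" and tx :: "'p \<times> nat \<Rightarrow> nat"
  assumes wf: "wf_instance N P"
    and lo: "strict_linear_order_on (Pk P) prec"
    and rlo: "\<forall>p\<in>Pk P. \<forall>q\<in>Pk P. rl P p < rl P q \<longrightarrow> (p, q) \<in> prec"
    and run: "alg_run N P prec asg tx"
begin

abbreviation "C \<equiv> chunks N P asg"
abbreviation "ed \<equiv> edgeOf asg"
abbreviation "w \<equiv> cw N P asg"
abbreviation "bef \<equiv> chunk_before N P prec asg"

definition "A p e = {c \<in> Bset N P prec asg tx p. adj (ed c) e}"
definition "Hs p e = {c \<in> A p e. w c \<ge> wt P p / real (dR N e)}"
definition "Ls p e = A p e - Hs p e"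

lemma imp_eq: "imp N P prec asg tx p e = wt P p * (real (dSrc N (fst e)) + (real (dR N e) + 1) / 2 + real (dDst N (snd e)))
         + wt P p * real (card (Hs p e)) + real (dR N e) * sum w (Ls p e)"
  by (simp add: imp_def Let_def A_def Hs_def Ls_def)

lemma prec_asym: "(a,b) \<in> prec \<Longrightarrow> (b,a) \<notin> prec"
  using lo unfolding strict_linear_order_on_def trans_def irrefl_def by blast

lemma prec_irrefl: "(a,a) \<notin> prec"
  using lo unfolding strict_linear_order_on_def irrefl_def by blast

lemma prec_total: "a \<in> Pk P \<Longrightarrow> b \<in> Pk P \<Longrightarrow> a \<noteq> b \<Longrightarrow> (a,b) \<in> prec \<or> (b,a) \<in> prec"
  using lo unfolding strict_linear_order_on_def total_on_def by blast

lemma prec_rl: "a \<in> Pk P \<Longrightarrow> b \<in> Pk P \<Longrightarrow> (a,b) \<in> prec \<Longrightarrow> rl P a \<le> rl P b"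
proof (rule ccontr)
  assume ab: "a \<in> Pk P" "b \<in> Pk P" "(a,b) \<in> prec" and n: "\<not> rl P a \<le> rl P b"
  then have "(b,a) \<in> prec" using rlo by simp
  then show False using prec_asym[OF ab(3)] by simp
qed

lemma proc: "p \<in> Pk P \<Longrightarrow> proc_ok N P prec asg tx p"
  using run by (simp add: alg_run_def)

lemma asg_Some: "asg p = Some e \<Longrightarrow> p \<in> Pk P \<and> e \<in> Ep N P p"
proof -
  assume a: "asg p = Some e"
  then have p: "p \<in> Pk P" using run by (auto simp: alg_run_def)
  then show ?thesis using proc[OF p] a by (auto simp: proc_ok_def split: if_splits)
qed

lemma Ep_props: "p \<in> Pk P \<Longrightarrow> e \<in> Ep N P p \<Longrightarrow> e \<in> ER N \<and> dR N e \<ge> 1 \<and> fst e \<in> Trs N \<and> snd e \<in> Rcv N"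
  using wf by (auto simp: wf_instance_def Ep_def)

lemma C_eq: "C = Sigma {p \<in> Pk P. asg p \<noteq> None} (\<lambda>p. {..<dR N (the (asg p))})"
  by (auto simp: chunks_def)

lemma fin_Pk: "finite (Pk P)" using wf by (simp add: wf_instance_def)

lemma fin_C: "finite C"
  unfolding C_eq using fin_Pk by (intro finite_SigmaI) auto

lemma C_D: "c \<in> C \<Longrightarrow> fst c \<in> Pk P \<and> asg (fst c) = Some (ed c) \<and> ed c \<in> Ep N P (fst c) \<and>
   dR N (ed c) \<ge> 1 \<and> snd c < dR N (ed c) \<and> w c = wt P (fst c) / real (dR N (ed c)) \<and> w c > 0"
proof -
  assume c: "c \<in> C"
  then obtain e where e: "asg (fst c) = Some e" "snd c < dR N e" "fst c \<in> Pk P"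
    by (auto simp: chunks_def)
  then have "ed c = e" by (simp add: edgeOf_def)
  moreover have "e \<in> Ep N P (fst c)" using asg_Some[OF e(1)] by simp
  moreover have "wt P (fst c) > 0" using wf e(3) by (auto simp: wf_instance_def)
  ultimately show ?thesis using e Ep_props[of "fst c" e] by (auto simp: cw_def)
qed

lemma w_nonneg: "c \<in> C \<Longrightarrow> w c \<ge> 0"
proof -
  assume "c \<in> C"
  then have "w c > 0" using C_D by blast
  then show ?thesis by simp
qed

lemma wt_pos: "p \<in> Pk P \<Longrightarrow> wt P p > 0" using wf by (auto simp: wf_instance_def)
lemma rl_pos: "p \<in> Pk P \<Longrightarrow> rl P p \<ge> 1" using wf by (auto simp: wf_instance_def)

lemma tx_ge: "c \<in> C \<Longrightarrow> rl P (fst c) \<le> tx c"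
  using run by (auto simp: alg_run_def)

lemma sched: "\<tau> \<ge> 1 \<Longrightarrow> sched_ok N P prec asg tx \<tau>"
  using run by (auto simp: alg_run_def)

lemma indep: "c1 \<in> C \<Longrightarrow> c2 \<in> C \<Longrightarrow> tx c1 = tx c2 \<Longrightarrow> c1 \<noteq> c2 \<Longrightarrow> \<not> adj (ed c1) (ed c2)"
proof -
  assume a: "c1 \<in> C" "c2 \<in> C" "tx c1 = tx c2" "c1 \<noteq> c2"
  define \<tau> where "\<tau> = tx c1"
  have "fst c1 \<in> Pk P" using C_D[OF a(1)] by blast
  then have "rl P (fst c1) \<ge> 1" by (rule rl_pos)
  then have "\<tau> \<ge> 1" using tx_ge[OF a(1)] unfolding \<tau>_def by linarith
  then have "sched_ok N P prec asg tx \<tau>" by (rule sched)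
  then obtain L where L: "{c \<in> C. tx c = \<tau>} = greedy ed L" unfolding sched_ok_def by (elim exE conjE)
  have "c1 \<in> {c \<in> C. tx c = \<tau>}" "c2 \<in> {c \<in> C. tx c = \<tau>}" using a unfolding \<tau>_def by simp_all
  then have "c1 \<in> greedy ed L" "c2 \<in> greedy ed L" unfolding L by simp_all
  then show ?thesis using greedy_indep a(4) by metis
qed

lemma blocker: "c \<in> C \<Longrightarrow> rl P (fst c) \<le> \<tau> \<Longrightarrow> \<tau> < tx c \<Longrightarrow>
   \<exists>c''\<in>C. tx c'' = \<tau> \<and> adj (ed c'') (ed c) \<and> \<not> bef c c''"
proof -
  assume a: "c \<in> C" "rl P (fst c) \<le> \<tau>" "\<tau> < tx c"
  have "fst c \<in> Pk P" using C_D[OF a(1)] by blast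
  then have "rl P (fst c) \<ge> 1" by (rule rl_pos)
  then have "\<tau> \<ge> 1" using a(2) by linarith
  then have "sched_ok N P prec asg tx \<tau>" by (rule sched)
  then obtain L where L: "distinct L" "set L = pending N P asg tx \<tau>"
    "sorted_wrt (\<lambda>a b. \<not> bef b a) L" "{c \<in> C. tx c = \<tau>} = greedy ed L"
    unfolding sched_ok_def by (elim exE conjE)
  have cL: "c \<in> set L" using L(2) a by (auto simp: pending_def)
  have "c \<notin> {c \<in> C. tx c = \<tau>}" using a by simp
  then have cG: "c \<notin> greedy ed L" unfolding L(4) .
  obtain i j where ij: "i < j" "j < length L" "L!j = c" "L!i \<in> greedy ed L" "adj (ed (L!i)) (ed c)"
    using greedy_block[OF cL cG] by blast
  have "\<not> bef (L!j) (L!i)" using L(3) ij by (auto simp: sorted_wrt_iff_nth_less)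
  have "L!i \<in> {c \<in> C. tx c = \<tau>}" using ij(4) unfolding L(4) .
  then show ?thesis using ij \<open>\<not> bef (L!j) (L!i)\<close> by (intro bexI[of _ "L!i"]) auto
qed

end


context setting begin

definition "Blk c = {c''\<in>C. adj (ed c'') (ed c) \<and> \<not> bef c c'' \<and> rl P (fst c) \<le> tx c'' \<and> tx c'' < tx c}"
definition "Own c = {c''\<in>Blk c. fst c'' = fst c}"
definition "Early c = {c''\<in>Blk c. (fst c'', fst c) \<in> prec}"
definition "Late c = {c''\<in>Blk c. (fst c, fst c'') \<in> prec}"

lemma fin_sub_C: "X \<subseteq> C \<Longrightarrow> finite X" using fin_C finite_subset by blast

lemma Blk_sub: "Blk c \<subseteq> C" by (auto simp: Blk_def)

lemma delay: "c \<in> C \<Longrightarrow> real (tx c) - real (rl P (fst c)) \<le> real (card (Blk c))"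
proof -
  assume c: "c \<in> C"
  have "{rl P (fst c)..<tx c} \<subseteq> tx ` Blk c"
  proof
    fix \<tau> assume "\<tau> \<in> {rl P (fst c)..<tx c}"
    then have "rl P (fst c) \<le> \<tau>" "\<tau> < tx c" by auto
    then obtain c'' where "c''\<in>C" "tx c'' = \<tau>" "adj (ed c'') (ed c)" "\<not> bef c c''"
      using blocker[OF c] by blast
    then show "\<tau> \<in> tx ` Blk c" using \<open>\<tau> \<in> _\<close> unfolding Blk_def by force
  qed
  then have "card {rl P (fst c)..<tx c} \<le> card (tx ` Blk c)"
    using fin_sub_C[OF Blk_sub] by (intro card_mono) auto
  also have "\<dots> \<le> card (Blk c)" by (rule card_image_le) (rule fin_sub_C[OF Blk_sub])
  finally show ?thesis using tx_ge[OF c] by simp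
qed

lemma Blk_split: "c \<in> C \<Longrightarrow> card (Blk c) \<le> card (Own c) + card (Early c) + card (Late c)"
proof -
  assume c: "c \<in> C"
  have "Blk c = Own c \<union> Early c \<union> Late c"
    unfolding Own_def Early_def Late_def using prec_total C_D c Blk_sub by blast
  then have "card (Blk c) \<le> card (Own c \<union> Early c) + card (Late c)" by (metis card_Un_le)
  also have "\<dots> \<le> card (Own c) + card (Early c) + card (Late c)" using card_Un_le by simp
  finally show ?thesis .
qed

lemma Early_sub: "c \<in> C \<Longrightarrow> Early c \<subseteq> Hs (fst c) (ed c)"
proof
  fix c'' assume c: "c \<in> C" and c'': "c'' \<in> Early c"
  then have a: "c'' \<in> C" "adj (ed c'') (ed c)" "\<not> bef c c''" "rl P (fst c) \<le> tx c''" "(fst c'', fst c) \<in> prec"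
    by (auto simp: Early_def Blk_def)
  have "w c'' \<ge> w c" using a(3) by (auto simp: chunk_before_def)
  then show "c'' \<in> Hs (fst c) (ed c)"
    using a C_D[OF c] by (auto simp: Hs_def A_def Bset_def)
qed

lemma Late_in: "c \<in> C \<Longrightarrow> c'' \<in> Late c \<Longrightarrow> c \<in> Ls (fst c'') (ed c'')"
proof -
  assume c: "c \<in> C" and c'': "c'' \<in> Late c"
  then have a: "c'' \<in> C" "adj (ed c'') (ed c)" "\<not> bef c c''" "rl P (fst c) \<le> tx c''" "tx c'' < tx c" "(fst c, fst c'') \<in> prec"
    by (auto simp: Late_def Blk_def)
  have "w c < w c''" using a(3) a(6) by (auto simp: chunk_before_def)
  moreover have "rl P (fst c'') \<le> tx c" using tx_ge[OF a(1)] a(5) by simp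
  ultimately show ?thesis
    using a c C_D[OF a(1)] by (auto simp: Ls_def Hs_def A_def Bset_def adj_sym)
qed

lemma Own_sub: "c \<in> C \<Longrightarrow> Own c \<subseteq> (\<lambda>j. (fst c, j)) ` {j. j < dR N (ed c) \<and> tx (fst c, j) < tx c}"
proof
  fix c'' assume c: "c \<in> C" and c'': "c'' \<in> Own c"
  then have a: "c'' \<in> C" "fst c'' = fst c" "tx c'' < tx c" by (auto simp: Own_def Blk_def)
  have "ed c'' = ed c" using a(2) by (simp add: edgeOf_def)
  have eq: "c'' = (fst c, snd c'')" using a(2) by (metis prod.collapse)
  show "c'' \<in> (\<lambda>j. (fst c, j)) ` {j. j < dR N (ed c) \<and> tx (fst c, j) < tx c}"
  proof (rule image_eqI[where x="snd c''"])
    show "c'' = (fst c, snd c'')" by (rule eq)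
    have "snd c'' < dR N (ed c)" using C_D[OF a(1)] \<open>ed c'' = ed c\<close> by simp
    moreover have "tx (fst c, snd c'') < tx c" using eq a(3) by simp
    ultimately show "snd c'' \<in> {j. j < dR N (ed c) \<and> tx (fst c, j) < tx c}" by simp
  qed
qed

end


context setting begin

abbreviation "Q \<equiv> {p \<in> Pk P. asg p \<noteq> None}"
abbreviation "ee p \<equiv> the (asg p)"
abbreviation "dd p \<equiv> dR N (the (asg p))"

definition "cost c = w c * (real (tx c + 1 + dSrc N (fst (ed c)) + dDst N (snd (ed c))) - real (rl P (fst c)))"

lemma sum_C: "(\<Sum>c\<in>C. f c) = (\<Sum>p\<in>Q. \<Sum>i<dd p. f (p,i))"
  unfolding C_eq by (subst sum.Sigma) (auto simp: fin_Pk)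

lemma chunk_of: "p \<in> Q \<Longrightarrow> i < dd p \<Longrightarrow> (p,i) \<in> C \<and> ed (p,i) = ee p \<and> w (p,i) = wt P p / real (dd p)"
  by (auto simp: chunks_def edgeOf_def cw_def)

lemma Q_props: "p \<in> Q \<Longrightarrow> ee p \<in> Ep N P p \<and> dd p \<ge> 1"
  using asg_Some Ep_props by fastforce

lemma AHL_sub: "Ls p e \<subseteq> C" "Hs p e \<subseteq> C" "A p e \<subseteq> C"
  by (auto simp: Ls_def Hs_def A_def Bset_def)

lemma cost_le: "c \<in> C \<Longrightarrow> cost c \<le> w c * (1 + real (dSrc N (fst (ed c))) + real (dDst N (snd (ed c))))
   + w c * card (Own c) + w c * card (Early c) + w c * card (Late c)"
proof -
  assume c: "c \<in> C"
  have "real (tx c) - real (rl P (fst c)) \<le> card (Own c) + card (Early c) + card (Late c)"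
    using delay[OF c] Blk_split[OF c] by linarith
  then have "w c * (real (tx c) - real (rl P (fst c))) \<le> w c * (card (Own c) + card (Early c) + card (Late c))"
    using w_nonneg[OF c] by (rule mult_left_mono)
  then show ?thesis unfolding cost_def by (simp add: algebra_simps)
qed

lemma own_bound: "p \<in> Q \<Longrightarrow> (\<Sum>i<dd p. w (p,i) * card (Own (p,i))) \<le> wt P p * (real (dd p) - 1) / 2"
proof -
  assume p: "p \<in> Q"
  let ?d = "dd p"
  have d1: "?d \<ge> 1" using Q_props[OF p] by simp
  have inj: "inj_on (\<lambda>j. tx (p,j)) {..<?d}"
  proof (rule inj_onI)
    fix i j assume "i \<in> {..<?d}" "j \<in> {..<?d}" "tx (p,i) = tx (p,j)"
    then show "i = j" using indep[of "(p,i)" "(p,j)"] chunk_of[OF p] by fastforce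
  qed
  have cardle: "card (Own (p,i)) \<le> card {j\<in>{..<?d}. tx (p,j) < tx (p,i)}" if i: "i < ?d" for i
  proof -
    have ci: "(p,i) \<in> C" "ed (p,i) = ee p" using chunk_of[OF p i] by auto
    have "card (Own (p,i)) \<le> card ((\<lambda>j. (p, j)) ` {j. j < dR N (ed (p,i)) \<and> tx (p, j) < tx (p,i)})"
      using Own_sub[OF ci(1)] by (intro card_mono) auto
    also have "\<dots> \<le> card {j. j < dR N (ed (p,i)) \<and> tx (p, j) < tx (p,i)}" by (rule card_image_le) simp
    also have "\<dots> = card {j\<in>{..<?d}. tx (p,j) < tx (p,i)}" using ci by (intro arg_cong[where f=card]) auto
    finally show ?thesis .
  qed
  have cp: "2 * (\<Sum>i\<in>{..<?d}. card {j\<in>{..<?d}. tx (p,j) < tx (p,i)}) = ?d * ?d - ?d"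
    using count_pairs[OF _ inj] by simp
  have "(\<Sum>i<?d. w (p,i) * card (Own (p,i))) \<le> (\<Sum>i<?d. (wt P p / real ?d) * card {j\<in>{..<?d}. tx (p,j) < tx (p,i)})"
  proof (rule sum_mono)
    fix i assume i: "i \<in> {..<?d}"
    have "w (p,i) = wt P p / real ?d" using chunk_of[OF p] i by simp
    moreover have "wt P p / real ?d \<ge> 0" using wt_pos[of p] p by (auto intro!: divide_nonneg_nonneg)
    moreover have "card (Own (p,i)) \<le> card {j\<in>{..<?d}. tx (p,j) < tx (p,i)}" using cardle[of i] i by simp
    ultimately show "w (p,i) * card (Own (p,i)) \<le> (wt P p / real ?d) * card {j\<in>{..<?d}. tx (p,j) < tx (p,i)}"
      by (subst (asm) (1) \<open>w (p,i) = _\<close>, simp only: \<open>w (p,i) = _\<close>, intro mult_left_mono) simp_all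
  qed
  also have "\<dots> = (wt P p / real ?d) * real (\<Sum>i<?d. card {j\<in>{..<?d}. tx (p,j) < tx (p,i)})"
    by (simp add: sum_distrib_left)
  also have "real (\<Sum>i<?d. card {j\<in>{..<?d}. tx (p,j) < tx (p,i)}) = (real ?d * real ?d - real ?d) / 2"
  proof -
    have "real (2 * (\<Sum>i<?d. card {j\<in>{..<?d}. tx (p,j) < tx (p,i)})) = real (?d * ?d - ?d)"
      using cp by simp
    also have "\<dots> = real ?d * real ?d - real ?d" using d1 by (simp add: of_nat_diff)
    finally show ?thesis by simp
  qed
  also have "(wt P p / real ?d) * ((real ?d * real ?d - real ?d) / 2) = wt P p * (real ?d - 1) / 2"
    using d1 by (simp add: field_simps)
  finally show ?thesis .
qed

lemma early_bound: "p \<in> Q \<Longrightarrow> (\<Sum>i<dd p. w (p,i) * card (Early (p,i))) \<le> wt P p * card (Hs p (ee p))"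
proof -
  assume p: "p \<in> Q"
  have d1: "dd p \<ge> 1" using Q_props[OF p] by simp
  have "(\<Sum>i<dd p. w (p,i) * card (Early (p,i))) \<le> (\<Sum>i<dd p. (wt P p / real (dd p)) * card (Hs p (ee p)))"
  proof (rule sum_mono)
    fix i assume i: "i \<in> {..<dd p}"
    have ci: "(p,i) \<in> C" "ed (p,i) = ee p" "w (p,i) = wt P p / real (dd p)" using chunk_of[OF p] i by auto
    have "card (Early (p,i)) \<le> card (Hs p (ee p))"
      using Early_sub[OF ci(1)] ci AHL_sub fin_sub_C by (intro card_mono) auto
    moreover have "wt P p / real (dd p) \<ge> 0" using wt_pos[of p] p by (auto intro!: divide_nonneg_nonneg)
    ultimately show "w (p,i) * card (Early (p,i)) \<le> (wt P p / real (dd p)) * card (Hs p (ee p))"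
      by (subst ci(3), intro mult_left_mono) simp_all
  qed
  also have "\<dots> = wt P p * card (Hs p (ee p))" using d1 by simp
  finally show ?thesis .
qed

lemma late_bound: "(\<Sum>c\<in>C. w c * card (Late c)) \<le> (\<Sum>p\<in>Q. real (dd p) * sum w (Ls p (ee p)))"
proof -
  have LateC: "Late c \<subseteq> C" for c by (auto simp: Late_def Blk_def)
  have "(\<Sum>c\<in>C. w c * card (Late c)) = (\<Sum>c\<in>C. \<Sum>c''\<in>C. if c'' \<in> Late c then w c else 0)"
  proof (rule sum.cong[OF refl])
    fix c assume "c \<in> C"
    have "(\<Sum>c''\<in>C. if c'' \<in> Late c then w c else 0) = (\<Sum>c''\<in>C \<inter> Late c. w c)"
      by (rule sum.inter_restrict[symmetric]) (rule fin_C)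
    also have "C \<inter> Late c = Late c" using LateC by blast
    finally show "w c * card (Late c) = (\<Sum>c''\<in>C. if c'' \<in> Late c then w c else 0)" by simp
  qed
  also have "\<dots> = (\<Sum>c''\<in>C. \<Sum>c\<in>C. if c'' \<in> Late c then w c else 0)" by (rule sum.swap)
  also have "\<dots> \<le> (\<Sum>c''\<in>C. \<Sum>c\<in>C. if c \<in> Ls (fst c'') (ed c'') then w c else 0)"
    by (intro sum_mono) (auto intro: w_nonneg dest: Late_in)
  also have "\<dots> = (\<Sum>c''\<in>C. sum w (Ls (fst c'') (ed c'')))"
  proof (rule sum.cong[OF refl])
    fix c'' assume "c'' \<in> C"
    have "(\<Sum>c\<in>C. if c \<in> Ls (fst c'') (ed c'') then w c else 0) = sum w (C \<inter> Ls (fst c'') (ed c''))"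
      by (rule sum.inter_restrict[symmetric]) (rule fin_C)
    also have "C \<inter> Ls (fst c'') (ed c'') = Ls (fst c'') (ed c'')" using AHL_sub by blast
    finally show "(\<Sum>c\<in>C. if c \<in> Ls (fst c'') (ed c'') then w c else 0) = sum w (Ls (fst c'') (ed c''))" .
  qed
  also have "\<dots> = (\<Sum>p\<in>Q. \<Sum>i<dd p. sum w (Ls p (ee p)))"
    by (subst sum_C) (auto simp: edgeOf_def)
  also have "\<dots> = (\<Sum>p\<in>Q. real (dd p) * sum w (Ls p (ee p)))" by simp
  finally show ?thesis .
qed

end


context setting begin

lemma chunkcost_bound: "(\<Sum>c\<in>C. cost c) \<le> (\<Sum>p\<in>Q. imp N P prec asg tx p (ee p))"
proof -
  let ?f = "\<lambda>c. w c * (1 + real (dSrc N (fst (ed c))) + real (dDst N (snd (ed c)))) + w c * card (Own c) + w c * card (Early c)"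
  have "(\<Sum>c\<in>C. cost c) \<le> (\<Sum>c\<in>C. ?f c + w c * card (Late c))"
    by (intro sum_mono) (drule cost_le, simp)
  also have "\<dots> = (\<Sum>c\<in>C. ?f c) + (\<Sum>c\<in>C. w c * card (Late c))" by (rule sum.distrib)
  also have "(\<Sum>c\<in>C. ?f c) = (\<Sum>p\<in>Q. \<Sum>i<dd p. ?f (p,i))" by (rule sum_C)
  also have "\<dots> \<le> (\<Sum>p\<in>Q. wt P p * (1 + real (dSrc N (fst (ee p))) + real (dDst N (snd (ee p))))
       + wt P p * (real (dd p) - 1) / 2 + wt P p * card (Hs p (ee p)))"
  proof (rule sum_mono)
    fix p assume p: "p \<in> Q"
    have d1: "dd p \<ge> 1" using Q_props[OF p] by simp
    have "(\<Sum>i<dd p. ?f (p,i)) = (\<Sum>i<dd p. (wt P p / real (dd p)) * (1 + real (dSrc N (fst (ee p))) + real (dDst N (snd (ee p)))))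
       + (\<Sum>i<dd p. w (p,i) * card (Own (p,i))) + (\<Sum>i<dd p. w (p,i) * card (Early (p,i)))"
      by (simp add: sum.distrib chunk_of[OF p])
    also have "(\<Sum>i<dd p. (wt P p / real (dd p)) * (1 + real (dSrc N (fst (ee p))) + real (dDst N (snd (ee p)))))
       = wt P p * (1 + real (dSrc N (fst (ee p))) + real (dDst N (snd (ee p))))" using d1 by simp
    finally show "(\<Sum>i<dd p. ?f (p,i)) \<le> wt P p * (1 + real (dSrc N (fst (ee p))) + real (dDst N (snd (ee p))))
       + wt P p * (real (dd p) - 1) / 2 + wt P p * card (Hs p (ee p))"
      using own_bound[OF p] early_bound[OF p] by linarith
  qed
  finally have "(\<Sum>c\<in>C. cost c) \<le> (\<Sum>p\<in>Q. wt P p * (1 + real (dSrc N (fst (ee p))) + real (dDst N (snd (ee p))))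
       + wt P p * (real (dd p) - 1) / 2 + wt P p * card (Hs p (ee p))) + (\<Sum>p\<in>Q. real (dd p) * sum w (Ls p (ee p)))"
    using late_bound by linarith
  also have "\<dots> = (\<Sum>p\<in>Q. imp N P prec asg tx p (ee p))"
    unfolding sum.distrib[symmetric] imp_eq by (intro sum.cong refl) (simp add: field_simps)
  finally show ?thesis .
qed

definition "lam p = (case asg p of None \<Rightarrow> wt P p * real (ellp N P p) | Some e \<Rightarrow> imp N P prec asg tx p e)"

lemma alg_le_lam: "alg_cost N P asg tx \<le> (\<Sum>p\<in>Pk P. lam p)"
proof -
  have "alg_cost N P asg tx = (\<Sum>p\<in>{p \<in> Pk P. asg p = None}. lam p) + (\<Sum>c\<in>C. cost c)"
    unfolding alg_cost_def cost_def lam_def by simp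
  also have "\<dots> \<le> (\<Sum>p\<in>{p \<in> Pk P. asg p = None}. lam p) + (\<Sum>p\<in>Q. lam p)"
  proof -
    have "(\<Sum>p\<in>Q. imp N P prec asg tx p (ee p)) = (\<Sum>p\<in>Q. lam p)"
      by (intro sum.cong refl) (auto simp: lam_def)
    then show ?thesis using chunkcost_bound by simp
  qed
  also have "\<dots> = (\<Sum>p\<in>Pk P. lam p)"
  proof -
    have "{p \<in> Pk P. asg p = None} \<union> Q = Pk P" by blast
    then show ?thesis using fin_Pk by (subst sum.union_disjoint[symmetric]) auto
  qed
  finally show ?thesis .
qed

lemma chunkcost_le_alg: "(\<Sum>c\<in>C. cost c) \<le> alg_cost N P asg tx"
proof -
  have "(\<Sum>p\<in>{p \<in> Pk P. asg p = None}. wt P p * real (ellp N P p)) \<ge> 0"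
  proof (intro sum_nonneg)
    fix p assume "p \<in> {p \<in> Pk P. asg p = None}"
    then have "wt P p > 0" using wt_pos by blast
    then show "wt P p * real (ellp N P p) \<ge> 0" by simp
  qed
  then show ?thesis unfolding alg_cost_def cost_def by simp
qed

end


lemma aux_real: fixes L W Dl t r D :: real
  shows "L \<le> W*Dl + 2*W*(t - r) + D \<Longrightarrow> 0 \<le> W*Dl \<Longrightarrow> L/2 \<le> W*(t + Dl - r) + D/2"
  by (simp add: algebra_simps)

context setting begin

definition "pend \<tau> c \<longleftrightarrow> rl P (fst c) \<le> \<tau> \<and> \<tau> \<le> tx c"
definition "bt \<tau> t = (\<Sum>c\<in>C. if pend \<tau> c \<and> fst (ed c) = t then w c else 0)"
definition "br \<tau> r = (\<Sum>c\<in>C. if pend \<tau> c \<and> snd (ed c) = r then w c else 0)"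

lemma bt_nonneg: "bt \<tau> t \<ge> 0" unfolding bt_def by (intro sum_nonneg) (auto intro: w_nonneg)
lemma br_nonneg: "br \<tau> t \<ge> 0" unfolding br_def by (intro sum_nonneg) (auto intro: w_nonneg)

lemma lam_le_imp: "p \<in> Pk P \<Longrightarrow> e \<in> Ep N P p \<Longrightarrow> lam p \<le> imp N P prec asg tx p e"
proof -
  assume p: "p \<in> Pk P" and e: "e \<in> Ep N P p"
  obtain e' where e': "e' \<in> Ep N P p" "\<forall>e''\<in>Ep N P p. imp N P prec asg tx p e' \<le> imp N P prec asg tx p e''"
    "if p \<in> PiL N P \<and> wt P p * real (ellp N P p) \<le> imp N P prec asg tx p e' then asg p = None else asg p = Some e'"
    using proc[OF p] unfolding proc_ok_def by blast
  show ?thesis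
  proof (cases "p \<in> PiL N P \<and> wt P p * real (ellp N P p) \<le> imp N P prec asg tx p e'")
    case True
    then show ?thesis using e' e by (auto simp: lam_def)
  next
    case False
    then show ?thesis using e' e by (auto simp: lam_def)
  qed
qed

lemma lam_le_ell: "p \<in> PiL N P \<Longrightarrow> lam p \<le> wt P p * real (ellp N P p)"
proof -
  assume pl: "p \<in> PiL N P"
  then have p: "p \<in> Pk P" by (simp add: PiL_def)
  obtain e' where e': "e' \<in> Ep N P p"
    "if p \<in> PiL N P \<and> wt P p * real (ellp N P p) \<le> imp N P prec asg tx p e' then asg p = None else asg p = Some e'"
    using proc[OF p] unfolding proc_ok_def by blast
  show ?thesis
  proof (cases "wt P p * real (ellp N P p) \<le> imp N P prec asg tx p e'")
    case True
    then show ?thesis using e' pl by (auto simp: lam_def)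
  next
    case False
    then show ?thesis using e' pl by (auto simp: lam_def)
  qed
qed

lemma imp_nonneg: "p \<in> Pk P \<Longrightarrow> e \<in> Ep N P p \<Longrightarrow> imp N P prec asg tx p e \<ge> 0"
proof -
  assume p: "p \<in> Pk P" and e: "e \<in> Ep N P p"
  have "sum w (Ls p e) \<ge> 0" using AHL_sub(1) w_nonneg by (intro sum_nonneg) blast
  moreover have "wt P p > 0" using wt_pos p by simp
  ultimately show ?thesis unfolding imp_eq by (intro add_nonneg_nonneg mult_nonneg_nonneg) auto
qed

lemma lam_nonneg: "p \<in> Pk P \<Longrightarrow> lam p \<ge> 0"
proof -
  assume p: "p \<in> Pk P"
  show ?thesis
  proof (cases "asg p")
    case None then show ?thesis using wt_pos[OF p] by (simp add: lam_def)
  next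
    case (Some e) then show ?thesis using imp_nonneg[OF p] asg_Some[OF Some] by (simp add: lam_def)
  qed
qed

lemma card_A1: "p \<in> Pk P \<Longrightarrow> e \<in> Ep N P p \<Longrightarrow> card {c \<in> A p e. tx c < \<tau>} \<le> 2 * (\<tau> - rl P p)"
proof -
  assume p: "p \<in> Pk P" and e: "e \<in> Ep N P p"
  define Mt where "Mt \<sigma> = {c\<in>C. tx c = \<sigma> \<and> fst (ed c) = fst e}" for \<sigma>
  define Mr where "Mr \<sigma> = {c\<in>C. tx c = \<sigma> \<and> snd (ed c) = snd e}" for \<sigma>
  have sub: "{c \<in> A p e. tx c < \<tau>} \<subseteq> (\<Union>\<sigma>\<in>{rl P p..<\<tau>}. Mt \<sigma> \<union> Mr \<sigma>)"
    by (auto simp: A_def Bset_def Mt_def Mr_def adj_def)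
  have c1: "card (Mt \<sigma>) \<le> 1" for \<sigma>
  proof -
    have "finite (Mt \<sigma>)" using fin_sub_C by (auto simp: Mt_def)
    moreover have "\<forall>a1\<in>Mt \<sigma>. \<forall>a2\<in>Mt \<sigma>. a1 = a2"
    proof (intro ballI)
      fix a1 a2 assume a: "a1 \<in> Mt \<sigma>" "a2 \<in> Mt \<sigma>"
      show "a1 = a2"
      proof (rule ccontr)
        assume "a1 \<noteq> a2"
        then have "\<not> adj (ed a1) (ed a2)" using indep a by (simp add: Mt_def)
        then show False using a by (simp add: Mt_def adj_def)
      qed
    qed
    ultimately show ?thesis by (simp add: card_le_Suc0_iff_eq)
  qed
  have c2: "card (Mr \<sigma>) \<le> 1" for \<sigma>
  proof -
    have "finite (Mr \<sigma>)" using fin_sub_C by (auto simp: Mr_def)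
    moreover have "\<forall>a1\<in>Mr \<sigma>. \<forall>a2\<in>Mr \<sigma>. a1 = a2"
    proof (intro ballI)
      fix a1 a2 assume a: "a1 \<in> Mr \<sigma>" "a2 \<in> Mr \<sigma>"
      show "a1 = a2"
      proof (rule ccontr)
        assume "a1 \<noteq> a2"
        then have "\<not> adj (ed a1) (ed a2)" using indep a by (simp add: Mr_def)
        then show False using a by (simp add: Mr_def adj_def)
      qed
    qed
    ultimately show ?thesis by (simp add: card_le_Suc0_iff_eq)
  qed
  have "card {c \<in> A p e. tx c < \<tau>} \<le> card (\<Union>\<sigma>\<in>{rl P p..<\<tau>}. Mt \<sigma> \<union> Mr \<sigma>)"
    using sub fin_C by (intro card_mono) (auto simp: Mt_def Mr_def)
  also have "\<dots> \<le> (\<Sum>\<sigma>\<in>{rl P p..<\<tau>}. card (Mt \<sigma> \<union> Mr \<sigma>))" by (rule card_UN_le) simp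
  also have "\<dots> \<le> (\<Sum>\<sigma>\<in>{rl P p..<\<tau>}. 2)"
  proof (rule sum_mono)
    fix \<sigma> show "card (Mt \<sigma> \<union> Mr \<sigma>) \<le> 2" using card_Un_le[of "Mt \<sigma>" "Mr \<sigma>"] c1[of \<sigma>] c2[of \<sigma>] by simp
  qed
  also have "\<dots> = 2 * (\<tau> - rl P p)" by simp
  finally show ?thesis .
qed

lemma imp_bound: "p \<in> Pk P \<Longrightarrow> e \<in> Ep N P p \<Longrightarrow> rl P p \<le> \<tau> \<Longrightarrow>
  imp N P prec asg tx p e \<le> wt P p * real (Delta N e) + 2 * wt P p * (real \<tau> - real (rl P p))
     + real (dR N e) * (bt \<tau> (fst e) + br \<tau> (snd e))"
proof -
  assume p: "p \<in> Pk P" and e: "e \<in> Ep N P p" and \<tau>: "rl P p \<le> \<tau>"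
  define W where "W = wt P p"
  define d where "d = real (dR N e)"
  have W: "W > 0" using wt_pos p by (simp add: W_def)
  have d: "d \<ge> 1" using Ep_props[OF p e] by (simp add: d_def)
  define g where "g c = (if c \<in> Hs p e then W else d * w c)" for c
  define A1 where "A1 = {c \<in> A p e. tx c < \<tau>}"
  define A2 where "A2 = {c \<in> A p e. \<not> tx c < \<tau>}"
  have finA: "finite (A p e)" by (rule fin_sub_C[OF AHL_sub(3)])
  have hs1: "A p e \<inter> {c. c \<in> Hs p e} = Hs p e" by (auto simp: Hs_def)
  have hs2: "A p e \<inter> - {c. c \<in> Hs p e} = Ls p e" by (auto simp: Ls_def)
  have "(\<Sum>c\<in>A p e. g c) = sum (\<lambda>c. W) (A p e \<inter> {c. c \<in> Hs p e}) + sum (\<lambda>c. d * w c) (A p e \<inter> - {c. c \<in> Hs p e})"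
    unfolding g_def by (rule sum.If_cases[OF finA])
  then have sumg: "(\<Sum>c\<in>A p e. g c) = W * card (Hs p e) + d * sum w (Ls p e)"
    unfolding hs1 hs2 by (simp add: sum_distrib_left mult.commute)
  have d0: "d > 0" using d by simp
  have gW: "g c \<le> W" if "c \<in> A p e" for c
  proof (cases "c \<in> Hs p e")
    case False
    then have "w c < W / d" using that by (auto simp: Hs_def W_def d_def)
    then have "d * w c < d * (W / d)" using d0 by (rule mult_strict_left_mono)
    also have "d * (W / d) = W" using d0 by simp
    finally show ?thesis using False by (simp add: g_def)
  qed (simp add: g_def)
  have gd: "g c \<le> d * w c" if "c \<in> A p e" for c
  proof (cases "c \<in> Hs p e")
    case True
    then have "W / d \<le> w c" using that by (auto simp: Hs_def W_def d_def)
    then have "d * (W / d) \<le> d * w c" using d0 by (intro mult_left_mono) simp_all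
    also have "d * (W / d) = W" using d0 by simp
    finally show ?thesis using True by (simp add: g_def)
  qed (simp add: g_def)
  have split: "(\<Sum>c\<in>A p e. g c) = (\<Sum>c\<in>A1. g c) + (\<Sum>c\<in>A2. g c)"
    unfolding A1_def A2_def using finA by (subst sum.union_disjoint[symmetric]) (auto intro: sum.cong)
  have s1: "(\<Sum>c\<in>A1. g c) \<le> W * card A1"
  proof -
    have "(\<Sum>c\<in>A1. g c) \<le> (\<Sum>c\<in>A1. W)" using gW by (intro sum_mono) (auto simp: A1_def)
    then show ?thesis by (simp add: mult.commute)
  qed
  have s2: "W * card A1 \<le> W * (2 * (real \<tau> - real (rl P p)))"
  proof -
    have "card A1 \<le> 2 * (\<tau> - rl P p)" unfolding A1_def by (rule card_A1[OF p e])
    then have "real (card A1) \<le> 2 * (real \<tau> - real (rl P p))" using \<tau> by (simp add: of_nat_diff)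
    then show ?thesis using W by simp
  qed
  have s3: "(\<Sum>c\<in>A2. g c) \<le> d * sum w A2"
  proof -
    have "(\<Sum>c\<in>A2. g c) \<le> (\<Sum>c\<in>A2. d * w c)" using gd by (intro sum_mono) (auto simp: A2_def)
    then show ?thesis by (simp add: sum_distrib_left)
  qed
  have s4: "sum w A2 \<le> bt \<tau> (fst e) + br \<tau> (snd e)"
  proof -
    have A2C: "A2 \<subseteq> C" using AHL_sub(3)[of p e] unfolding A2_def by blast
    have "sum w A2 = sum w (C \<inter> A2)" using A2C by (simp add: Int_absorb1)
    also have "\<dots> = (\<Sum>c\<in>C. if c \<in> A2 then w c else 0)" by (rule sum.inter_restrict[OF fin_C])
    also have "\<dots> \<le> (\<Sum>c\<in>C. (if pend \<tau> c \<and> fst (ed c) = fst e then w c else 0) + (if pend \<tau> c \<and> snd (ed c) = snd e then w c else 0))"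
    proof (rule sum_mono)
      fix c assume c: "c \<in> C"
      show "(if c \<in> A2 then w c else 0) \<le> (if pend \<tau> c \<and> fst (ed c) = fst e then w c else 0) + (if pend \<tau> c \<and> snd (ed c) = snd e then w c else 0)"
      proof (cases "c \<in> A2")
        case True
        then have a: "(fst c, p) \<in> prec" "adj (ed c) e" "\<tau> \<le> tx c" by (auto simp: A2_def A_def Bset_def)
        have "fst c \<in> Pk P" using C_D[OF c] by blast
        then have "rl P (fst c) \<le> rl P p" using prec_rl[OF _ p a(1)] by blast
        then have pe: "pend \<tau> c" using a \<tau> by (simp add: pend_def)
        have wn: "w c \<ge> 0" by (rule w_nonneg[OF c])
        show ?thesis
        proof (cases "fst (ed c) = fst e")
          case True then show ?thesis using pe wn \<open>c \<in> A2\<close> by simp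
        next
          case False
          then have "snd (ed c) = snd e" using a(2) by (simp add: adj_def)
          then show ?thesis using pe wn \<open>c \<in> A2\<close> by simp
        qed
      next
        case False
        then show ?thesis using w_nonneg[OF c] by simp
      qed
    qed
    also have "\<dots> = bt \<tau> (fst e) + br \<tau> (snd e)" unfolding bt_def br_def by (rule sum.distrib)
    finally show ?thesis .
  qed
  have s5: "d * sum w A2 \<le> d * (bt \<tau> (fst e) + br \<tau> (snd e))"
    using s4 d by (intro mult_left_mono) simp_all
  have s6: "W * (real (dSrc N (fst e)) + (d + 1) / 2 + real (dDst N (snd e))) \<le> W * real (Delta N e)"
    using W d by (intro mult_left_mono) (auto simp: Delta_def d_def)
  have ie: "imp N P prec asg tx p e = W * (real (dSrc N (fst e)) + (d + 1) / 2 + real (dDst N (snd e))) + (\<Sum>c\<in>A p e. g c)"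
    unfolding imp_eq sumg W_def d_def by simp
  have "imp N P prec asg tx p e \<le> W * real (Delta N e) + W * (2 * (real \<tau> - real (rl P p))) + d * (bt \<tau> (fst e) + br \<tau> (snd e))"
    using ie split s1 s2 s3 s5 s6 by linarith
  then show ?thesis unfolding W_def d_def by (simp add: algebra_simps)
qed

lemma dual_ineq: "p \<in> Pk P \<Longrightarrow> e \<in> Ep N P p \<Longrightarrow> rl P p \<le> \<tau> \<Longrightarrow>
  lam p / 2 \<le> wt P p * (real \<tau> + real (Delta N e) - real (rl P p)) + real (dR N e) * (bt \<tau> (fst e) + br \<tau> (snd e)) / 2"
proof -
  assume a: "p \<in> Pk P" "e \<in> Ep N P p" "rl P p \<le> \<tau>"
  have "lam p \<le> wt P p * real (Delta N e) + 2 * wt P p * (real \<tau> - real (rl P p))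
     + real (dR N e) * (bt \<tau> (fst e) + br \<tau> (snd e))"
    using lam_le_imp[OF a(1,2)] imp_bound[OF a] by linarith
  moreover have "wt P p * real (Delta N e) \<ge> 0" using wt_pos[OF a(1)] by simp
  ultimately show ?thesis by (rule aux_real)
qed

end


lemma reindex_aux:
  fixes F :: "'p \<Rightarrow> ('t \<times> 'r) \<Rightarrow> nat \<Rightarrow> real"
  assumes fin: "finite K" "finite T" "finite R" and sub: "\<forall>p\<in>K. E p \<subseteq> T \<times> R"
  shows "(\<Sum>p\<in>K. \<Sum>e\<in>E p. \<Sum>\<tau>\<in>{a p..H}. F p e \<tau>)
       = (\<Sum>p\<in>K. \<Sum>t\<in>T. \<Sum>r\<in>R. \<Sum>\<tau>\<in>{..H}. if (t,r) \<in> E p \<and> a p \<le> \<tau> then F p (t,r) \<tau> else 0)"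
proof (rule sum.cong[OF refl])
  fix p assume p: "p \<in> K"
  have "(\<Sum>e\<in>E p. \<Sum>\<tau>\<in>{a p..H}. F p e \<tau>) = (\<Sum>e\<in>(T\<times>R) \<inter> E p. \<Sum>\<tau>\<in>{a p..H}. F p e \<tau>)"
    using sub p by (simp add: Int_absorb1)
  also have "\<dots> = (\<Sum>e\<in>T\<times>R. if e \<in> E p then (\<Sum>\<tau>\<in>{a p..H}. F p e \<tau>) else 0)"
    using fin by (intro sum.inter_restrict) auto
  also have "\<dots> = (\<Sum>e\<in>T\<times>R. \<Sum>\<tau>\<in>{..H}. if e \<in> E p \<and> a p \<le> \<tau> then F p e \<tau> else 0)"
  proof (rule sum.cong[OF refl])
    fix e
    have "(\<Sum>\<tau>\<in>{a p..H}. F p e \<tau>) = (\<Sum>\<tau>\<in>{..H} \<inter> {\<tau>. a p \<le> \<tau>}. F p e \<tau>)"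
      by (intro sum.cong) auto
    also have "\<dots> = (\<Sum>\<tau>\<in>{..H}. if \<tau> \<in> {\<tau>. a p \<le> \<tau>} then F p e \<tau> else 0)"
      by (intro sum.inter_restrict) auto
    finally show "(if e \<in> E p then (\<Sum>\<tau>\<in>{a p..H}. F p e \<tau>) else 0) = (\<Sum>\<tau>\<in>{..H}. if e \<in> E p \<and> a p \<le> \<tau> then F p e \<tau> else 0)"
      by auto
  qed
  also have "\<dots> = (\<Sum>t\<in>T. \<Sum>r\<in>R. \<Sum>\<tau>\<in>{..H}. if (t,r) \<in> E p \<and> a p \<le> \<tau> then F p (t,r) \<tau> else 0)"
    by (subst sum.cartesian_product) simp
  finally show "(\<Sum>e\<in>E p. \<Sum>\<tau>\<in>{a p..H}. F p e \<tau>) = (\<Sum>t\<in>T. \<Sum>r\<in>R. \<Sum>\<tau>\<in>{..H}. if (t,r) \<in> E p \<and> a p \<le> \<tau> then F p (t,r) \<tau> else 0)" .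
qed

lemma inner_filter:
  fixes F :: "'p \<Rightarrow> ('t \<times> 'r) \<Rightarrow> nat \<Rightarrow> real"
  assumes "finite K"
  shows "(\<Sum>p\<in>{p \<in> K. a p \<le> \<tau> \<and> (t,r) \<in> E p}. F p (t,r) \<tau>) = (\<Sum>p\<in>K. if (t,r) \<in> E p \<and> a p \<le> \<tau> then F p (t,r) \<tau> else 0)"
  using assms by (subst sum.inter_filter[symmetric]) (auto intro: sum.cong)

lemma reindex_t:
  fixes F :: "'p \<Rightarrow> ('t \<times> 'r) \<Rightarrow> nat \<Rightarrow> real"
  assumes fin: "finite K" "finite T" "finite R" and sub: "\<forall>p\<in>K. E p \<subseteq> T \<times> R"
  shows "(\<Sum>p\<in>K. \<Sum>e\<in>E p. \<Sum>\<tau>\<in>{a p..H}. F p e \<tau>)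
       = (\<Sum>\<tau>\<in>{..H}. \<Sum>t\<in>T. \<Sum>r\<in>R. \<Sum>p\<in>{p \<in> K. a p \<le> \<tau> \<and> (t,r) \<in> E p}. F p (t,r) \<tau>)"
proof -
  let ?G = "\<lambda>p t r \<tau>. if (t,r) \<in> E p \<and> a p \<le> \<tau> then F p (t,r) \<tau> else 0"
  have "(\<Sum>\<tau>\<in>{..H}. \<Sum>t\<in>T. \<Sum>r\<in>R. \<Sum>p\<in>{p \<in> K. a p \<le> \<tau> \<and> (t,r) \<in> E p}. F p (t,r) \<tau>)
      = (\<Sum>\<tau>\<in>{..H}. \<Sum>t\<in>T. \<Sum>r\<in>R. \<Sum>p\<in>K. ?G p t r \<tau>)"
    using fin by (simp add: inner_filter)
  also have "\<dots> = (\<Sum>t\<in>T. \<Sum>\<tau>\<in>{..H}. \<Sum>r\<in>R. \<Sum>p\<in>K. ?G p t r \<tau>)" by (rule sum.swap)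
  also have "\<dots> = (\<Sum>t\<in>T. \<Sum>r\<in>R. \<Sum>\<tau>\<in>{..H}. \<Sum>p\<in>K. ?G p t r \<tau>)" by (intro sum.cong refl sum.swap)
  also have "\<dots> = (\<Sum>t\<in>T. \<Sum>r\<in>R. \<Sum>p\<in>K. \<Sum>\<tau>\<in>{..H}. ?G p t r \<tau>)" by (intro sum.cong refl sum.swap)
  also have "\<dots> = (\<Sum>t\<in>T. \<Sum>p\<in>K. \<Sum>r\<in>R. \<Sum>\<tau>\<in>{..H}. ?G p t r \<tau>)" by (intro sum.cong refl sum.swap)
  also have "\<dots> = (\<Sum>p\<in>K. \<Sum>t\<in>T. \<Sum>r\<in>R. \<Sum>\<tau>\<in>{..H}. ?G p t r \<tau>)" by (rule sum.swap)
  finally show ?thesis using reindex_aux[OF assms, where a=a and H=H and F=F] by simp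
qed

lemma reindex_r:
  fixes F :: "'p \<Rightarrow> ('t \<times> 'r) \<Rightarrow> nat \<Rightarrow> real"
  assumes fin: "finite K" "finite T" "finite R" and sub: "\<forall>p\<in>K. E p \<subseteq> T \<times> R"
  shows "(\<Sum>p\<in>K. \<Sum>e\<in>E p. \<Sum>\<tau>\<in>{a p..H}. F p e \<tau>)
       = (\<Sum>\<tau>\<in>{..H}. \<Sum>r\<in>R. \<Sum>t\<in>T. \<Sum>p\<in>{p \<in> K. a p \<le> \<tau> \<and> (t,r) \<in> E p}. F p (t,r) \<tau>)"
proof -
  have "(\<Sum>\<tau>\<in>{..H}. \<Sum>r\<in>R. \<Sum>t\<in>T. \<Sum>p\<in>{p \<in> K. a p \<le> \<tau> \<and> (t,r) \<in> E p}. F p (t,r) \<tau>)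
     = (\<Sum>\<tau>\<in>{..H}. \<Sum>t\<in>T. \<Sum>r\<in>R. \<Sum>p\<in>{p \<in> K. a p \<le> \<tau> \<and> (t,r) \<in> E p}. F p (t,r) \<tau>)"
    by (intro sum.cong refl sum.swap)
  then show ?thesis using reindex_t[OF assms, where a=a and H=H and F=F] by simp
qed



lemma tsum_lin:
  fixes a b c :: "'p \<Rightarrow> 'e \<Rightarrow> nat \<Rightarrow> real"
  shows "(\<Sum>p\<in>K. \<Sum>e\<in>E p. \<Sum>\<tau>\<in>I p. a p e \<tau> - b p e \<tau> / 2 - c p e \<tau> / 2)
     = (\<Sum>p\<in>K. \<Sum>e\<in>E p. \<Sum>\<tau>\<in>I p. a p e \<tau>) - (\<Sum>p\<in>K. \<Sum>e\<in>E p. \<Sum>\<tau>\<in>I p. b p e \<tau>) / 2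
       - (\<Sum>p\<in>K. \<Sum>e\<in>E p. \<Sum>\<tau>\<in>I p. c p e \<tau>) / 2"
  by (simp add: sum_subtractf sum_divide_distrib)

context setting begin

lemma fin_Trs: "finite (Trs N)" using wf by (simp add: wf_instance_def)
lemma fin_Rcv: "finite (Rcv N)" using wf by (simp add: wf_instance_def)

lemma group_le:
  assumes "finite X"
  shows "(\<Sum>x\<in>X. \<Sum>c\<in>C. if pend \<tau> c \<and> h c = x then w c else 0) \<le> (\<Sum>c\<in>C. if pend \<tau> c then w c else 0)"
proof -
  have "(\<Sum>x\<in>X. \<Sum>c\<in>C. if pend \<tau> c \<and> h c = x then w c else 0) = (\<Sum>c\<in>C. \<Sum>x\<in>X. if pend \<tau> c \<and> h c = x then w c else 0)"
    by (rule sum.swap)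
  also have "\<dots> \<le> (\<Sum>c\<in>C. if pend \<tau> c then w c else 0)"
  proof (rule sum_mono)
    fix c assume c: "c \<in> C"
    show "(\<Sum>x\<in>X. if pend \<tau> c \<and> h c = x then w c else 0) \<le> (if pend \<tau> c then w c else 0)"
    proof (cases "pend \<tau> c")
      case True
      have "(\<Sum>x\<in>X. if pend \<tau> c \<and> h c = x then w c else 0) = (\<Sum>x\<in>X. if h c = x then w c else 0)"
        using True by simp
      also have "\<dots> = (if h c \<in> X then w c else 0)" using assms by (simp add: sum.delta')
      also have "\<dots> \<le> w c" using w_nonneg[OF c] by simp
      finally show ?thesis using True by simp
    qed simp
  qed
  finally show ?thesis .
qed

lemma pend_total: "(\<Sum>\<tau>\<in>{..H}. \<Sum>c\<in>C. if pend \<tau> c then w c else 0) \<le> (\<Sum>c\<in>C. cost c)"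
proof -
  have "(\<Sum>\<tau>\<in>{..H}. \<Sum>c\<in>C. if pend \<tau> c then w c else 0) = (\<Sum>c\<in>C. \<Sum>\<tau>\<in>{..H}. if pend \<tau> c then w c else 0)"
    by (rule sum.swap)
  also have "\<dots> \<le> (\<Sum>c\<in>C. cost c)"
  proof (rule sum_mono)
    fix c assume c: "c \<in> C"
    have "(\<Sum>\<tau>\<in>{..H}. if pend \<tau> c then w c else 0) = sum (\<lambda>_. w c) {\<tau>\<in>{..H}. pend \<tau> c}"
      by (rule sum.inter_filter[symmetric]) simp
    also have "\<dots> = real (card {\<tau>\<in>{..H}. pend \<tau> c}) * w c" by simp
    also have "\<dots> \<le> real (tx c + 1 - rl P (fst c)) * w c"
    proof (rule mult_right_mono)
      have "{\<tau>\<in>{..H}. pend \<tau> c} \<subseteq> {rl P (fst c)..tx c}" by (auto simp: pend_def)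
      then have "card {\<tau>\<in>{..H}. pend \<tau> c} \<le> card {rl P (fst c)..tx c}" by (intro card_mono) auto
      then show "real (card {\<tau>\<in>{..H}. pend \<tau> c}) \<le> real (tx c + 1 - rl P (fst c))" by simp
    qed (rule w_nonneg[OF c])
    also have "\<dots> \<le> cost c"
    proof -
      have "real (tx c + 1 - rl P (fst c)) = real (tx c) + 1 - real (rl P (fst c))"
        using tx_ge[OF c] by (simp add: of_nat_diff)
      also have "\<dots> \<le> real (tx c + 1 + dSrc N (fst (ed c)) + dDst N (snd (ed c))) - real (rl P (fst c))" by simp
      finally show ?thesis unfolding cost_def using w_nonneg[OF c] by (simp add: mult.commute mult_left_mono)
    qed
    finally show "(\<Sum>\<tau>\<in>{..H}. if pend \<tau> c then w c else 0) \<le> cost c" .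
  qed
  finally show ?thesis .
qed

lemma St_le: "(\<Sum>\<tau>\<in>{..H}. \<Sum>t\<in>Trs N. bt \<tau> t) \<le> (\<Sum>c\<in>C. cost c)"
proof -
  have "(\<Sum>\<tau>\<in>{..H}. \<Sum>t\<in>Trs N. bt \<tau> t) \<le> (\<Sum>\<tau>\<in>{..H}. \<Sum>c\<in>C. if pend \<tau> c then w c else 0)"
    unfolding bt_def by (intro sum_mono group_le fin_Trs)
  then show ?thesis using pend_total[of H] by linarith
qed

lemma Sr_le: "(\<Sum>\<tau>\<in>{..H}. \<Sum>r\<in>Rcv N. br \<tau> r) \<le> (\<Sum>c\<in>C. cost c)"
proof -
  have "(\<Sum>\<tau>\<in>{..H}. \<Sum>r\<in>Rcv N. br \<tau> r) \<le> (\<Sum>\<tau>\<in>{..H}. \<Sum>c\<in>C. if pend \<tau> c then w c else 0)"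
    unfolding br_def by (intro sum_mono group_le fin_Rcv)
  then show ?thesis using pend_total[of H] by linarith
qed

end


lemma aux2: fixes X L W Z D B1 B2 :: real
  assumes "X \<ge> 0" "L/2 \<le> W*Z + D*(B1+B2)/2"
  shows "X*(L/2) - D*X*B1/2 - D*X*B2/2 \<le> W*X*Z"
proof -
  have "X*(L/2) \<le> X*(W*Z + D*(B1+B2)/2)" using assms by (rule mult_left_mono[rotated])
  also have "X*(W*Z + D*(B1+B2)/2) = W*X*Z + D*X*B1/2 + D*X*B2/2" by (simp add: algebra_simps)
  finally show ?thesis by linarith
qed

context setting begin

lemma main_bound:
  assumes feas: "lp_feasible N P \<epsilon> H x y" and eps: "\<epsilon> > 0"
  shows "alg_cost N P asg tx \<le> 2 * (2 / \<epsilon> + 1) * lp_obj N P H x y"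
proof -
  note F = feas[unfolded lp_feasible_def]
  have xnn: "\<forall>p\<in>Pk P. \<forall>e\<in>Ep N P p. \<forall>\<tau>\<in>{rl P p..H}. x p e \<tau> \<ge> 0" by (rule F[THEN conjunct1])
  have ynn: "\<forall>p\<in>PiL N P. y p \<ge> 0" by (rule F[THEN conjunct2, THEN conjunct1])
  have covL: "\<forall>p\<in>PiL N P. (\<Sum>e\<in>Ep N P p. \<Sum>\<tau>\<in>{rl P p..H}. x p e \<tau>) + y p \<ge> 1"
    by (rule F[THEN conjunct2, THEN conjunct2, THEN conjunct1])
  have covN: "\<forall>p\<in>Pk P - PiL N P. (\<Sum>e\<in>Ep N P p. \<Sum>\<tau>\<in>{rl P p..H}. x p e \<tau>) \<ge> 1"
    by (rule F[THEN conjunct2, THEN conjunct2, THEN conjunct2, THEN conjunct1])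
  have capT: "\<forall>\<tau>\<le>H. \<forall>t\<in>Trs N.
        (\<Sum>r\<in>Rcv N. \<Sum>p\<in>{p \<in> Pk P. rl P p \<le> \<tau> \<and> (t,r) \<in> Ep N P p}.
            real (dR N (t,r)) * x p (t,r) \<tau>) \<le> 1 / (2 + \<epsilon>)"
    by (rule F[THEN conjunct2, THEN conjunct2, THEN conjunct2, THEN conjunct2, THEN conjunct1])
  have capR: "\<forall>\<tau>\<le>H. \<forall>r\<in>Rcv N.
        (\<Sum>t\<in>Trs N. \<Sum>p\<in>{p \<in> Pk P. rl P p \<le> \<tau> \<and> (t,r) \<in> Ep N P p}.
            real (dR N (t,r)) * x p (t,r) \<tau>) \<le> 1 / (2 + \<epsilon>)"
    by (rule F[THEN conjunct2, THEN conjunct2, THEN conjunct2, THEN conjunct2, THEN conjunct2])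
  have Esub: "\<forall>p\<in>Pk P. Ep N P p \<subseteq> Trs N \<times> Rcv N" using Ep_props by fastforce

  define X where "X p = (\<Sum>e\<in>Ep N P p. \<Sum>\<tau>\<in>{rl P p..H}. x p e \<tau>)" for p
  define T1 where "T1 = (\<Sum>p\<in>Pk P. \<Sum>e\<in>Ep N P p. \<Sum>\<tau>\<in>{rl P p..H}.
        wt P p * x p e \<tau> * (real \<tau> + real (Delta N e) - real (rl P p)))"
  define T2 where "T2 = (\<Sum>p\<in>PiL N P. wt P p * real (ellp N P p) * y p)"
  define S1 where "S1 = (\<Sum>p\<in>Pk P. \<Sum>e\<in>Ep N P p. \<Sum>\<tau>\<in>{rl P p..H}. x p e \<tau> * (lam p / 2))"
  define S2 where "S2 = (\<Sum>p\<in>Pk P. \<Sum>e\<in>Ep N P p. \<Sum>\<tau>\<in>{rl P p..H}. real (dR N e) * x p e \<tau> * bt \<tau> (fst e))"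
  define S3 where "S3 = (\<Sum>p\<in>Pk P. \<Sum>e\<in>Ep N P p. \<Sum>\<tau>\<in>{rl P p..H}. real (dR N e) * x p e \<tau> * br \<tau> (snd e))"
  define St where "St = (\<Sum>\<tau>\<in>{..H}. \<Sum>t\<in>Trs N. bt \<tau> t)"
  define Sr where "Sr = (\<Sum>\<tau>\<in>{..H}. \<Sum>r\<in>Rcv N. br \<tau> r)"
  define ALG where "ALG = alg_cost N P asg tx"

  have obj: "lp_obj N P H x y = T1 + T2" unfolding lp_obj_def T1_def T2_def by simp
  have step1: "S1 - S2 / 2 - S3 / 2 \<le> T1"
  proof -
    have "(\<Sum>p\<in>Pk P. \<Sum>e\<in>Ep N P p. \<Sum>\<tau>\<in>{rl P p..H}. x p e \<tau> * (lam p / 2)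
        - real (dR N e) * x p e \<tau> * bt \<tau> (fst e) / 2 - real (dR N e) * x p e \<tau> * br \<tau> (snd e) / 2) \<le> T1"
      unfolding T1_def
    proof (intro sum_mono)
      fix p e \<tau> assume p: "p \<in> Pk P" and e: "e \<in> Ep N P p" and \<tau>: "\<tau> \<in> {rl P p..H}"
      show "x p e \<tau> * (lam p / 2) - real (dR N e) * x p e \<tau> * bt \<tau> (fst e) / 2 - real (dR N e) * x p e \<tau> * br \<tau> (snd e) / 2
          \<le> wt P p * x p e \<tau> * (real \<tau> + real (Delta N e) - real (rl P p))"
      proof (rule aux2)
        show "x p e \<tau> \<ge> 0" using xnn p e \<tau> by blast
        show "lam p / 2 \<le> wt P p * (real \<tau> + real (Delta N e) - real (rl P p)) + real (dR N e) * (bt \<tau> (fst e) + br \<tau> (snd e)) / 2"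
          using dual_ineq[OF p e] \<tau> by simp
      qed
    qed
    then show ?thesis unfolding S1_def S2_def S3_def tsum_lin .
  qed
  have S1eq: "S1 = (\<Sum>p\<in>Pk P. X p * (lam p / 2))"
    unfolding S1_def X_def by (simp only: sum_distrib_right)
  have S2le: "S2 \<le> St / (2 + \<epsilon>)"
  proof -
    have "S2 = (\<Sum>\<tau>\<in>{..H}. \<Sum>t\<in>Trs N. \<Sum>r\<in>Rcv N. \<Sum>p\<in>{p \<in> Pk P. rl P p \<le> \<tau> \<and> (t,r) \<in> Ep N P p}.
          real (dR N (t,r)) * x p (t,r) \<tau> * bt \<tau> t)"
      unfolding S2_def using reindex_t[OF fin_Pk fin_Trs fin_Rcv Esub,
          where a="rl P" and H=H and F="\<lambda>p e \<tau>. real (dR N e) * x p e \<tau> * bt \<tau> (fst e)"] by simp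
    also have "\<dots> = (\<Sum>\<tau>\<in>{..H}. \<Sum>t\<in>Trs N. (\<Sum>r\<in>Rcv N. \<Sum>p\<in>{p \<in> Pk P. rl P p \<le> \<tau> \<and> (t,r) \<in> Ep N P p}.
          real (dR N (t,r)) * x p (t,r) \<tau>) * bt \<tau> t)"
      by (simp add: sum_distrib_right)
    also have "\<dots> \<le> (\<Sum>\<tau>\<in>{..H}. \<Sum>t\<in>Trs N. (1 / (2 + \<epsilon>)) * bt \<tau> t)"
    proof (intro sum_mono)
      fix \<tau> t assume "\<tau> \<in> {..H}" "t \<in> Trs N"
      then show "(\<Sum>r\<in>Rcv N. \<Sum>p\<in>{p \<in> Pk P. rl P p \<le> \<tau> \<and> (t,r) \<in> Ep N P p}.
          real (dR N (t,r)) * x p (t,r) \<tau>) * bt \<tau> t \<le> (1 / (2 + \<epsilon>)) * bt \<tau> t"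
        using capT bt_nonneg by (intro mult_right_mono) auto
    qed
    also have "\<dots> = St / (2 + \<epsilon>)" unfolding St_def by (simp add: sum_divide_distrib)
    finally show ?thesis .
  qed
  have S3le: "S3 \<le> Sr / (2 + \<epsilon>)"
  proof -
    have "S3 = (\<Sum>\<tau>\<in>{..H}. \<Sum>r\<in>Rcv N. \<Sum>t\<in>Trs N. \<Sum>p\<in>{p \<in> Pk P. rl P p \<le> \<tau> \<and> (t,r) \<in> Ep N P p}.
          real (dR N (t,r)) * x p (t,r) \<tau> * br \<tau> r)"
      unfolding S3_def using reindex_r[OF fin_Pk fin_Trs fin_Rcv Esub,
          where a="rl P" and H=H and F="\<lambda>p e \<tau>. real (dR N e) * x p e \<tau> * br \<tau> (snd e)"] by simp
    also have "\<dots> = (\<Sum>\<tau>\<in>{..H}. \<Sum>r\<in>Rcv N. (\<Sum>t\<in>Trs N. \<Sum>p\<in>{p \<in> Pk P. rl P p \<le> \<tau> \<and> (t,r) \<in> Ep N P p}.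
          real (dR N (t,r)) * x p (t,r) \<tau>) * br \<tau> r)"
      by (simp add: sum_distrib_right)
    also have "\<dots> \<le> (\<Sum>\<tau>\<in>{..H}. \<Sum>r\<in>Rcv N. (1 / (2 + \<epsilon>)) * br \<tau> r)"
    proof (intro sum_mono)
      fix \<tau> r assume "\<tau> \<in> {..H}" "r \<in> Rcv N"
      then show "(\<Sum>t\<in>Trs N. \<Sum>p\<in>{p \<in> Pk P. rl P p \<le> \<tau> \<and> (t,r) \<in> Ep N P p}.
          real (dR N (t,r)) * x p (t,r) \<tau>) * br \<tau> r \<le> (1 / (2 + \<epsilon>)) * br \<tau> r"
        using capR br_nonneg by (intro mult_right_mono) auto
    qed
    also have "\<dots> = Sr / (2 + \<epsilon>)" unfolding Sr_def by (simp add: sum_divide_distrib)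
    finally show ?thesis .
  qed
  have PiLsub: "PiL N P \<subseteq> Pk P" by (auto simp: PiL_def)
  have T2ge: "(\<Sum>p\<in>PiL N P. (lam p / 2) * y p) \<le> T2"
    unfolding T2_def
  proof (rule sum_mono)
    fix p assume p: "p \<in> PiL N P"
    have "lam p \<ge> 0" using lam_nonneg PiLsub p by blast
    then have "lam p / 2 \<le> wt P p * real (ellp N P p)" using lam_le_ell[OF p] by linarith
    then show "lam p / 2 * y p \<le> wt P p * real (ellp N P p) * y p"
      using ynn p by (intro mult_right_mono) auto
  qed
  have step6: "(\<Sum>p\<in>Pk P. lam p / 2) \<le> (\<Sum>p\<in>Pk P. X p * (lam p / 2)) + (\<Sum>p\<in>PiL N P. (lam p / 2) * y p)"
  proof -
    have "(\<Sum>p\<in>PiL N P. (lam p / 2) * y p) = (\<Sum>p\<in>Pk P \<inter> PiL N P. (lam p / 2) * y p)"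
      using PiLsub by (simp add: Int_absorb1)
    also have "\<dots> = (\<Sum>p\<in>Pk P. if p \<in> PiL N P then (lam p / 2) * y p else 0)"
      by (rule sum.inter_restrict[OF fin_Pk])
    finally have eq: "(\<Sum>p\<in>PiL N P. (lam p / 2) * y p) = (\<Sum>p\<in>Pk P. if p \<in> PiL N P then (lam p / 2) * y p else 0)" .
    have "(\<Sum>p\<in>Pk P. lam p / 2) \<le> (\<Sum>p\<in>Pk P. X p * (lam p / 2) + (if p \<in> PiL N P then (lam p / 2) * y p else 0))"
    proof (rule sum_mono)
      fix p assume p: "p \<in> Pk P"
      have l0: "lam p / 2 \<ge> 0" using lam_nonneg[OF p] by simp
      show "lam p / 2 \<le> X p * (lam p / 2) + (if p \<in> PiL N P then (lam p / 2) * y p else 0)"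
      proof (cases "p \<in> PiL N P")
        case True
        then have "X p + y p \<ge> 1" using covL by (simp add: X_def)
        then have "1 * (lam p / 2) \<le> (X p + y p) * (lam p / 2)" using l0 by (rule mult_right_mono)
        then show ?thesis using True by (simp add: algebra_simps)
      next
        case False
        then have "X p \<ge> 1" using covN p by (simp add: X_def)
        then have "1 * (lam p / 2) \<le> X p * (lam p / 2)" using l0 by (rule mult_right_mono)
        then show ?thesis using False by simp
      qed
    qed
    then show ?thesis unfolding eq sum.distrib .
  qed
  have A1: "ALG \<le> (\<Sum>p\<in>Pk P. lam p)" unfolding ALG_def by (rule alg_le_lam)
  have A2: "St \<le> ALG" unfolding St_def ALG_def using St_le[of H] chunkcost_le_alg by linarith
  have A3: "Sr \<le> ALG" unfolding Sr_def ALG_def using Sr_le[of H] chunkcost_le_alg by linarith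
  have half: "(\<Sum>p\<in>Pk P. lam p / 2) = (\<Sum>p\<in>Pk P. lam p) / 2" by (simp add: sum_divide_distrib)
  have e2: "2 + \<epsilon> > 0" using eps by simp
  have A4: "St / (2 + \<epsilon>) \<le> ALG / (2 + \<epsilon>)" using A2 e2 by (simp add: divide_right_mono)
  have A5: "Sr / (2 + \<epsilon>) \<le> ALG / (2 + \<epsilon>)" using A3 e2 by (simp add: divide_right_mono)
  have key: "ALG / 2 - ALG / (2 + \<epsilon>) \<le> lp_obj N P H x y"
    using obj step1 S1eq S2le S3le T2ge step6 A1 half A4 A5 by linarith
  have kpos: "2 * (2 / \<epsilon> + 1) \<ge> 0" using eps by simp
  have dpos: "\<epsilon> * 4 + \<epsilon> * (\<epsilon> * 2) > 0" using eps by (intro add_pos_pos mult_pos_pos) auto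
  have "ALG = 2 * (2 / \<epsilon> + 1) * (ALG / 2 - ALG / (2 + \<epsilon>))"
    using eps dpos by (simp add: field_simps)
  also have "\<dots> \<le> 2 * (2 / \<epsilon> + 1) * lp_obj N P H x y" using key kpos by (rule mult_left_mono)
  finally show ?thesis unfolding ALG_def .
qed

end

theorem mainTheorem1:
  fixes N :: "('s,'t,'r,'d) network" and P :: "('p,'s,'d) packets"
    and prec :: "('p \<times> 'p) set"
    and asg :: "'p \<Rightarrow> ('t \<times> 'r) option" and tx :: "'p \<times> nat \<Rightarrow> nat"
    and \<epsilon> :: real and H :: nat
  assumes "wf_instance N P"
    and "strict_linear_order_on (Pk P) prec"
    and "\<forall>p\<in>Pk P. \<forall>q\<in>Pk P. rl P p < rl P q \<longrightarrow> (p, q) \<in> prec"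
    and "alg_run N P prec asg tx"
    and "\<epsilon> > 0"
    and "\<forall>p\<in>Pk P. rl P p \<le> H"
  shows "ereal (alg_cost N P asg tx) \<le> ereal (2 * (2 / \<epsilon> + 1)) * lp_val N P \<epsilon> H"
proof -
  interpret setting N P prec asg tx using assms(1-4) by unfold_locales
  define K where "K = 2 * (2 / \<epsilon> + 1)"
  have K: "K > 0" using assms(5) unfolding K_def by (simp add: add_pos_pos)
  have "ereal (alg_cost N P asg tx / K) \<le> lp_val N P \<epsilon> H"
    unfolding lp_val_def
  proof (rule INF_greatest)
    fix xy assume "xy \<in> {(x,y). lp_feasible N P \<epsilon> H x y}"
    then have f: "lp_feasible N P \<epsilon> H (fst xy) (snd xy)" by auto
    have "alg_cost N P asg tx \<le> K * lp_obj N P H (fst xy) (snd xy)"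
      unfolding K_def by (rule main_bound[OF f assms(5)])
    then have "alg_cost N P asg tx / K \<le> lp_obj N P H (fst xy) (snd xy)"
      using K by (simp add: pos_divide_le_eq mult.commute)
    then show "ereal (alg_cost N P asg tx / K) \<le> ereal (lp_obj N P H (fst xy) (snd xy))" by simp
  qed
  then have "ereal K * ereal (alg_cost N P asg tx / K) \<le> ereal K * lp_val N P \<epsilon> H"
    by (rule ereal_mult_left_mono) (simp add: K less_imp_le)
  moreover have "ereal K * ereal (alg_cost N P asg tx / K) = ereal (alg_cost N P asg tx)" using K by simp
  ultimately show ?thesis unfolding K_def by simp
qed

end
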